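(* Let $\alpha\in(1,2)$. Let $\Theta=\begin{pmatrix} a_1 & a_2\\ a_3 & a_4\end{pmatrix}$ be a real $2\times2$ matrix, write $\Theta^j=\begin{pmatrix} a_1^{(j)} & a_2^{(j)}\\ a_3^{(j)} & a_4^{(j)}\end{pmatrix}$ ($\Theta^0=I$), and assume $\sum_{j=0}^\infty(|a_1^{(j)}|+|a_2^{(j)}|)<\infty$ and $\sum_{j=0}^\infty(|a_3^{(j)}|+|a_4^{(j)}|)<\infty$. Let $\{\mathbf{Z}(t)=(Z_1(t),Z_2(t))^T\}_{t\in\mathbb{Z}}$ be i.i.d. bidimensional sub-Gaussian random vectors with characteristic function $$\mathrm{E}\exp\{i\theta_1Z_1(t)+i\theta_2Z_2(t)\}=\exp\left\{-\left(\tfrac12\right)^{\alpha/2}\left|\theta_1^2R_{11}+2\theta_1\theta_2R_{12}+\theta_2^2R_{22}\right|^{\alpha/2}\right\},$$ where $R=\begin{pmatrix}R_{11}&R_{12}\\R_{12}&R_{22}\end{pmatrix}$ is the covariance matrix of the underlying zero-mean Gaussian vector. Let $$X_1(t)=\sum_{j=0}^{\infty}\left(a_1^{(j)}Z_1(t-j)+a_2^{(j)}Z_2(t-j)\right),\qquad X_2(t)=\sum_{j=0}^{\infty}\left(a_3^{(j)}Z_1(t-j)+a_4^{(j)}Z_2(t-j)\right).$$ Write $Q(u,v)=u^2R_{11}+2uvR_{12}+v^2R_{22}$. Then for every integer $h\ge0$: (a) $$\mathrm{CD}(X_1(t),X_2(t+h))=\left(\tfrac12\right)^{\alpha/2}\sum_{j=0}^\infty\left|Q(a_1^{(j)},a_2^{(j)})\right|^{\alpha/2}+\left(\tfrac12\right)^{\alpha/2}\sum_{j=0}^\infty\left|Q(a_3^{(j+h)},a_4^{(j+h)})\right|^{\alpha/2}-\left(\tfrac12\right)^{\alpha/2}\sum_{j=0}^\infty\left|Q(a_1^{(j)}-a_3^{(j+h)},\,a_2^{(j)}-a_4^{(j+h)})\right|^{\alpha/2};$$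 (b) $$\mathrm{CD}(X_1(t),X_2(t-h))=\left(\tfrac12\right)^{\alpha/2}\sum_{j=0}^\infty\left|Q(a_1^{(j+h)},a_2^{(j+h)})\right|^{\alpha/2}+\left(\tfrac12\right)^{\alpha/2}\sum_{j=0}^\infty\left|Q(a_3^{(j)},a_4^{(j)})\right|^{\alpha/2}-\left(\tfrac12\right)^{\alpha/2}\sum_{j=0}^\infty\left|Q(a_1^{(j+h)}-a_3^{(j)},\,a_2^{(j+h)}-a_4^{(j)})\right|^{\alpha/2}.$$
   Context: A bidimensional sub-Gaussian vector is $\mathbf{Z}=(A^{1/2}G_1,A^{1/2}G_2)$ where $(G_1,G_2)$ is a zero-mean Gaussian vector with $R_{11}=\mathrm{E}G_1^2$, $R_{12}=\mathrm{E}G_1G_2$, $R_{22}=\mathrm{E}G_2^2$, and $A$ is independent of $(G_1,G_2)$ with totally right-skewed $\alpha/2$-stable distribution $S_{\alpha/2}(\cos(\pi\alpha/4)^{2/\alpha},1,0)$; its characteristic function is the one displayed in the claim. For a bidimensional process the cross-codifference is $$\mathrm{CD}(X_1(t),X_2(s))=\log\mathrm{E}\exp\{i(X_1(t)-X_2(s))\}-\log\mathrm{E}\exp\{iX_1(t)\}-\log\mathrm{E}\exp\{-iX_2(s)\}.$$ *)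

theory Defs
  imports "HOL-Analysis.Analysis" "HOL-Probability.Probability"
begin

primrec mat_power :: "real^2^2 \<Rightarrow> nat \<Rightarrow> real^2^2" where
  "mat_power A 0 = mat 1"
| "mat_power A (Suc n) = mat_power A n ** A"

definition a1 :: "real^2^2 \<Rightarrow> nat \<Rightarrow> real" where "a1 A j = mat_power A j $ 1 $ 1"
definition a2 :: "real^2^2 \<Rightarrow> nat \<Rightarrow> real" where "a2 A j = mat_power A j $ 1 $ 2"
definition a3 :: "real^2^2 \<Rightarrow> nat \<Rightarrow> real" where "a3 A j = mat_power A j $ 2 $ 1"
definition a4 :: "real^2^2 \<Rightarrow> nat \<Rightarrow> real" where "a4 A j = mat_power A j $ 2 $ 2"

definition Qf :: "real \<Rightarrow> real \<Rightarrow> real \<Rightarrow> real \<Rightarrow> real \<Rightarrow> real" where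
  "Qf R11 R12 R22 u v = u^2 * R11 + 2 * u * v * R12 + v^2 * R22"

text \<open>Cross-codifference of two real random variables Y1, Y2 on M
  (logarithm = principal complex logarithm of the characteristic function values).\<close>
definition CD :: "'a measure \<Rightarrow> ('a \<Rightarrow> real) \<Rightarrow> ('a \<Rightarrow> real) \<Rightarrow> complex" where
  "CD M Y1 Y2 =
     Ln (CLINT w|M. cis (Y1 w - Y2 w)) - Ln (CLINT w|M. cis (Y1 w)) - Ln (CLINT w|M. cis (- Y2 w))"

end

theory Submission
  imports Defs
begin

lemma cis_sum: "finite A \<Longrightarrow> cis (sum f A) = (\<Prod>x\<in>A. cis (f x))"
  by (induction A rule: finite_induct) (auto simp: cis_mult[symmetric] add.commute)

lemma finite_cf:
  fixes Z1 Z2 :: "int \<Rightarrow> 'a \<Rightarrow> real" and \<psi> :: "real \<Rightarrow> real \<Rightarrow> real"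
  assumes P: "prob_space M"
  and meas1: "\<And>t. Z1 t \<in> borel_measurable M" and meas2: "\<And>t. Z2 t \<in> borel_measurable M"
  and ind: "prob_space.indep_vars M (\<lambda>_. borel) (\<lambda>t w. (Z1 t w, Z2 t w)) UNIV"
  and cf: "\<And>t \<theta>1 \<theta>2. (CLINT w|M. cis (\<theta>1 * Z1 t w + \<theta>2 * Z2 t w)) = complex_of_real (exp (- c * \<psi> \<theta>1 \<theta>2))"
  shows "(CLINT w|M. cis (\<Sum>n<N. b1 n * Z1 (T - int n) w + b2 n * Z2 (T - int n) w))
     = complex_of_real (exp (- c * (\<Sum>n<N. \<psi> (b1 n) (b2 n))))"
proof -
  interpret prob_space M by fact
  define I where "I = (\<lambda>n. T - int n) ` {..<N}"
  have inj: "inj_on (\<lambda>n. T - int n) {..<N}" by (auto simp: inj_on_def)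
  define F where "F s w = cis (b1 (nat (T - s)) * Z1 s w + b2 (nat (T - s)) * Z2 s w)" for s w
  have measF: "F s \<in> borel_measurable M" for s
    unfolding F_def cis_conv_exp using meas1 meas2 by measurable
  have intF: "integrable M (F s)" for s
    by (rule integrable_const_bound[where B=1]) (auto simp: F_def measF)
  have Y: "(\<lambda>p::real\<times>real. cis (b1 (nat (T - s)) * fst p + b2 (nat (T - s)) * snd p)) \<in> borel_measurable borel" for s
    unfolding cis_conv_exp by (intro borel_measurable_continuous_onI continuous_intros)
  have indF: "indep_vars (\<lambda>_. borel) F I"
    using indep_vars_compose2[where Y="\<lambda>s (p::real\<times>real). cis (b1 (nat (T - s)) * fst p + b2 (nat (T - s)) * snd p)"
        and N="\<lambda>_. borel", OF indep_vars_subset[OF ind subset_UNIV[of I]] Y]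
    by (simp add: F_def[abs_def])
  have eq1: "cis (\<Sum>n<N. b1 n * Z1 (T - int n) w + b2 n * Z2 (T - int n) w) = (\<Prod>s\<in>I. F s w)" for w
    unfolding I_def by (simp add: cis_sum prod.reindex[OF inj] F_def)
  have "(CLINT w|M. cis (\<Sum>n<N. b1 n * Z1 (T - int n) w + b2 n * Z2 (T - int n) w))
      = (CLINT w|M. (\<Prod>s\<in>I. F s w))" by (simp add: eq1)
  also have "\<dots> = (\<Prod>s\<in>I. CLINT w|M. F s w)"
    using indF intF by (intro indep_vars_lebesgue_integral) (auto simp: I_def)
  also have "\<dots> = (\<Prod>n<N. complex_of_real (exp (- c * \<psi> (b1 n) (b2 n))))"
    unfolding I_def by (simp add: prod.reindex[OF inj] F_def cf)
  also have "\<dots> = complex_of_real (exp (- c * (\<Sum>n<N. \<psi> (b1 n) (b2 n))))"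
  proof -
    have "(\<Sum>n<N. - (c * \<psi> (b1 n) (b2 n))) = - c * (\<Sum>n<N. \<psi> (b1 n) (b2 n))"
      by (simp add: sum_negf sum_distrib_left)
    then show ?thesis using exp_sum[of "{..<N}" "\<lambda>n. - (c * \<psi> (b1 n) (b2 n))"]
      by (simp del: of_real_prod add: of_real_prod[symmetric])
  qed
  finally show ?thesis .
qed

lemma levy_bound:
  fixes N :: "real measure"
  assumes rd: "real_distribution N" and "u > 0"
  shows "Re (CLBINT t:{-u..u}. 1 - char N t) \<ge> u * measure N {x. abs x \<ge> 2 / u}"
proof -
  interpret Mn: real_distribution N by fact
  have *: "\<And>u x. u > 0 \<Longrightarrow> x \<noteq> 0 \<Longrightarrow> (CLBINT t:{-u..u}. 1 - iexp (t * x)) =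
      2 * (u  - sin (u * x) / x)"
  proof -
    fix u :: real and x :: real
    assume "u > 0" and "x \<noteq> 0"
    hence "(CLBINT t:{-u..u}. 1 - iexp (t * x)) = (CLBINT t=-u..u. 1 - iexp (t * x))"
      by (subst interval_integral_Icc, auto)
    also have "\<dots> = (CLBINT t=-u..ereal 0. 1 - iexp (t * x)) + (CLBINT t= ereal 0..u. 1 - iexp (t * x))"
      using \<open>u > 0\<close>
      by (subst interval_integral_sum; force simp add: interval_integrable_isCont)
    also have "\<dots> = (CLBINT t=ereal 0..u. 1 - iexp (t * -x)) + (CLBINT t=ereal 0..u. 1 - iexp (t * x))"
      by (subst interval_integral_reflect, auto)
    also have "... = CLBINT xa=ereal 0..ereal u. 1 - iexp (xa * - x) + (1 - iexp (xa * x))"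
      by (subst interval_lebesgue_integral_add (2) [symmetric]) (auto simp: interval_integrable_isCont)
    also have "\<dots> = (LBINT t=ereal 0..u. 2 - 2 * cos (t * x))"
      unfolding exp_Euler cos_of_real by (simp flip: interval_lebesgue_integral_of_real)
    also have "\<dots> = 2 * u - 2 * sin (u * x) / x"
      by (subst interval_lebesgue_integral_diff)
         (auto intro!: interval_integrable_isCont
               simp: interval_lebesgue_integral_of_real integral_cos [OF \<open>x \<noteq> 0\<close>] mult.commute[of _ x])
    finally show "(CLBINT t:{-u..u}. 1 - iexp (t * x)) = 2 * (u  - sin (u * x) / x)"
      by (simp add: field_simps)
  qed
  interpret P: pair_sigma_finite N lborel ..
  have Mn1 [simp]: "measure N UNIV = 1" by (metis Mn.prob_space Mn.space_eq_univ)
  have Mn2 [simp]: "\<And>x. complex_integrable N (\<lambda>t. exp (\<i> * complex_of_real (x * t)))"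
    by (rule Mn.integrable_const_bound [where B = 1], auto)
  have Mn3: "set_integrable (N \<Otimes>\<^sub>M lborel) (UNIV \<times> {- u..u}) (\<lambda>a. 1 - exp (\<i> * complex_of_real (snd a * fst a)))"
    using \<open>0 < u\<close>
    unfolding set_integrable_def
    by (intro integrableI_bounded_set_indicator [where B="2"])
       (auto simp: lborel.emeasure_pair_measure_Times ennreal_mult_less_top not_less top_unique
             split: split_indicator
             intro!: order_trans [OF norm_triangle_ineq4])
  have "(CLBINT t:{-u..u}. 1 - char N t) =
      (CLBINT t:{-u..u}. (CLINT x | N. 1 - iexp (t * x)))"
    unfolding char_def by (rule set_lebesgue_integral_cong, auto simp del: of_real_mult)
  also have "\<dots> = (CLBINT t. (CLINT x | N. indicator {-u..u} t *\<^sub>R (1 - iexp (t * x))))"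
    unfolding set_lebesgue_integral_def
    by (rule Bochner_Integration.integral_cong) (auto split: split_indicator)
  also have "\<dots> = (CLINT x | N. (CLBINT t:{-u..u}. 1 - iexp (t * x)))"
    using Mn3 by (subst P.Fubini_integral) (auto simp: indicator_times split_beta' set_integrable_def set_lebesgue_integral_def)
  also have "\<dots> = (CLINT x | N. (if x = 0 then 0 else 2 * (u  - sin (u * x) / x)))"
    using \<open>u > 0\<close> by (intro Bochner_Integration.integral_cong, auto simp add: * simp del: of_real_mult)
  also have "\<dots> = (LINT x | N. (if x = 0 then 0 else 2 * (u  - sin (u * x) / x)))"
    by (rule integral_complex_of_real)
  finally have "Re (CLBINT t:{-u..u}. 1 - char N t) =
     (LINT x | N. (if x = 0 then 0 else 2 * (u  - sin (u * x) / x)))" by simp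
  also have "\<dots> \<ge> (LINT x : {x. abs x \<ge> 2 / u} | N. u)"
  proof -
    have "complex_integrable N (\<lambda>x. CLBINT t:{-u..u}. 1 - iexp (snd (x, t) * fst (x, t)))"
      using Mn3 unfolding set_integrable_def set_lebesgue_integral_def
      by (intro P.integrable_fst) (simp add: indicator_times split_beta')
    hence "complex_integrable N (\<lambda>x. if x = 0 then 0 else 2 * (u  - sin (u * x) / x))"
      using \<open>u > 0\<close>
      unfolding set_integrable_def
      by (subst Bochner_Integration.integrable_cong) (auto simp add: * simp del: of_real_mult)
    hence **: "integrable N (\<lambda>x. if x = 0 then 0 else 2 * (u  - sin (u * x) / x))"
      unfolding complex_of_real_integrable_eq .
    have "2 * sin x \<le> x" if "2 \<le> x" for x :: real
      by (rule order_trans[OF _ \<open>2 \<le> x\<close>]) auto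
    moreover have "x \<le> 2 * sin x" if "x \<le> - 2" for x :: real
      by (rule order_trans[OF \<open>x \<le> - 2\<close>]) auto
    moreover have "x < 0 \<Longrightarrow> x \<le> sin x" for x :: real
      using sin_x_le_x[of "-x"] by simp
    ultimately show ?thesis
      using \<open>u > 0\<close> unfolding set_lebesgue_integral_def
      by (intro integral_mono [OF _ **])
         (auto simp: divide_simps sin_x_le_x mult.commute[of u] mult_neg_pos top_unique less_top[symmetric]
               split: split_indicator)
  qed
  also (xtrans) have "(LINT x : {x. abs x \<ge> 2 / u} | N. u) = u * measure N {x. abs x \<ge> 2 / u}"
    unfolding set_lebesgue_integral_def
    by (simp add: Mn.emeasure_eq_measure)
  finally show ?thesis .
qed

lemma tail_bound:
  fixes X :: "'a \<Rightarrow> real" and g :: "real \<Rightarrow> real"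
  assumes P: "prob_space M" and Xm: "X \<in> borel_measurable M" and "u > 0"
    and cfX: "\<And>\<theta>. (CLINT w|M. cis (\<theta> * X w)) = complex_of_real (g \<theta>)"
    and contg: "continuous_on UNIV g"
    and bnd: "\<And>\<theta>. 1 - g \<theta> \<le> K * \<bar>\<theta>\<bar> powr \<alpha>" and K: "K \<ge> 0" and al: "\<alpha> \<ge> 0"
  shows "measure M {w\<in>space M. \<bar>X w\<bar> \<ge> 2 / u} \<le> 2 * K * u powr \<alpha>"
proof -
  interpret prob_space M by fact
  define N where "N = distr M borel X"
  have rd: "real_distribution N" unfolding N_def real_distribution_def
    by (auto intro!: prob_space_distr Xm simp: real_distribution_axioms_def)
  have ch: "char N \<theta> = complex_of_real (g \<theta>)" for \<theta>
    unfolding char_def N_def using Xm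
    by (simp add: integral_distr cfX[symmetric] cis_conv_exp mult.commute)
  have me: "measure N {x. abs x \<ge> 2 / u} = measure M {w\<in>space M. \<bar>X w\<bar> \<ge> 2 / u}"
    unfolding N_def using Xm by (subst measure_distr) (auto simp: vimage_def Int_def conj_commute)
  have "(CLBINT t:{-u..u}. 1 - char N t) = (CLBINT t:{-u..u}. complex_of_real (1 - g t))"
    by (simp add: ch)
  also have "\<dots> = complex_of_real (LBINT t:{-u..u}. 1 - g t)"
    by (rule set_integral_complex_of_real)
  finally have "Re (CLBINT t:{-u..u}. 1 - char N t) = (LBINT t:{-u..u}. 1 - g t)" by simp
  also have "\<dots> \<le> (LBINT t:{-u..u}. K * u powr \<alpha>)"
  proof (rule set_integral_mono)
    show "set_integrable lborel {- u..u} (\<lambda>t. 1 - g t)"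
      by (intro borel_integrable_atLeastAtMost' continuous_intros continuous_on_subset[OF contg]) auto
    show "set_integrable lborel {- u..u} (\<lambda>t. K * u powr \<alpha>)"
      by (intro borel_integrable_atLeastAtMost' continuous_intros)
    fix t assume "t \<in> {-u..u}"
    then have "\<bar>t\<bar> powr \<alpha> \<le> u powr \<alpha>" by (intro powr_mono2 al) auto
    then show "1 - g t \<le> K * u powr \<alpha>" using bnd[of t] mult_left_mono[OF _ K] by (meson order_trans)
  qed
  also have "\<dots> = 2 * u * (K * u powr \<alpha>)"
    using \<open>u > 0\<close> by (simp add: set_integral_const)
  finally have "u * measure N {x. abs x \<ge> 2 / u} \<le> u * (2 * K * u powr \<alpha>)"
    using levy_bound[OF rd \<open>u > 0\<close>] by (simp add: algebra_simps)
  then show ?thesis using \<open>u > 0\<close> me by simp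
qed

lemma summable_tail_fn:
  assumes "\<alpha> > 1"
  shows "summable (\<lambda>m. 2 * K * (2 / real (Suc m)) powr \<alpha>)"
proof -
  have "summable (\<lambda>n. real n powr (-\<alpha>))" using assms by (subst summable_real_powr_iff) simp
  then have "summable (\<lambda>m. real (Suc m) powr (-\<alpha>))" by (subst summable_Suc_iff)
  then have s: "summable (\<lambda>m. 2 * K * 2 powr \<alpha> * real (Suc m) powr (-\<alpha>))"
    by (rule summable_mult)
  have eq: "(\<lambda>m. 2 * K * 2 powr \<alpha> * real (Suc m) powr (-\<alpha>)) = (\<lambda>m. 2 * K * (2 / real (Suc m)) powr \<alpha>)"
  proof
    fix m
    show "2 * K * 2 powr \<alpha> * real (Suc m) powr (-\<alpha>) = 2 * K * (2 / real (Suc m)) powr \<alpha>"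
      by (simp only: powr_divide powr_minus_divide of_nat_0_le_iff) (simp add: divide_inverse)
  qed
  show ?thesis using s by (simp only: eq)
qed

lemma ennreal_le_count:
  fixes x :: real
  shows "ennreal \<bar>x\<bar> \<le> 1 + (\<Sum>m. ennreal (indicator {y. real (Suc m) \<le> \<bar>y\<bar>} x))"
proof -
  define k where "k = nat \<lfloor>\<bar>x\<bar>\<rfloor>"
  have "\<bar>x\<bar> \<le> 1 + real k" unfolding k_def by linarith
  then have 1: "ennreal \<bar>x\<bar> \<le> ennreal (1 + real k)" by (rule ennreal_leI)
  have 2: "ennreal (1 + real k) = 1 + of_nat k" by (simp add: ennreal_of_nat_eq_real_of_nat ennreal_plus)
  have 3: "(of_nat k :: ennreal) = (\<Sum>m<k. ennreal (indicator {y. real (Suc m) \<le> \<bar>y\<bar>} x))"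
  proof -
    have "m < k \<Longrightarrow> real (Suc m) \<le> \<bar>x\<bar>" for m unfolding k_def by linarith
    then have "(\<Sum>m<k. ennreal (indicator {y. real (Suc m) \<le> \<bar>y\<bar>} x)) = (\<Sum>m<k. 1)"
      by (intro sum.cong) (auto simp: indicator_def)
    then show ?thesis by simp
  qed
  have 4: "(\<Sum>m<k. ennreal (indicator {y. real (Suc m) \<le> \<bar>y\<bar>} x)) \<le> (\<Sum>m. ennreal (indicator {y. real (Suc m) \<le> \<bar>y\<bar>} x))"
    by (intro sum_le_suminf summableI) auto
  have "ennreal \<bar>x\<bar> \<le> 1 + of_nat k" using 1 2 by simp
  also have "\<dots> \<le> 1 + (\<Sum>m. ennreal (indicator {y. real (Suc m) \<le> \<bar>y\<bar>} x))"
    unfolding 3 using 4 by (rule add_left_mono)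
  finally show ?thesis .
qed

lemma moment_bound:
  fixes X :: "'a \<Rightarrow> real" and g :: "real \<Rightarrow> real"
  assumes P: "prob_space M" and Xm: "X \<in> borel_measurable M"
    and cfX: "\<And>\<theta>. (CLINT w|M. cis (\<theta> * X w)) = complex_of_real (g \<theta>)"
    and contg: "continuous_on UNIV g"
    and bnd: "\<And>\<theta>. 1 - g \<theta> \<le> K * \<bar>\<theta>\<bar> powr \<alpha>" and K: "K \<ge> 0" and al: "\<alpha> > 1"
  shows "(\<integral>\<^sup>+w. ennreal \<bar>X w\<bar> \<partial>M) \<le> ennreal (1 + (\<Sum>m. 2 * K * (2 / real (Suc m)) powr \<alpha>))"
proof -
  interpret prob_space M by fact
  define f where "f m = 2 * K * (2 / real (Suc m)) powr \<alpha>" for m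
  have fsum: "summable f" unfolding f_def using summable_tail_fn[OF al] .
  have fnn: "0 \<le> f m" for m unfolding f_def using K by simp
  define A where "A m = {w\<in>space M. real (Suc m) \<le> \<bar>X w\<bar>}" for m
  have Asets: "A m \<in> sets M" for m unfolding A_def using Xm by measurable
  have tb: "emeasure M (A m) \<le> ennreal (f m)" for m
  proof -
    have u: "2 / (2 / real (Suc m)) = real (Suc m)" by simp
    have "measure M (A m) \<le> f m"
      using tail_bound[OF P Xm _ cfX contg bnd K, of "2 / real (Suc m)"] al
      unfolding A_def f_def u by simp
    then show ?thesis by (simp add: emeasure_eq_measure ennreal_leI)
  qed
  have "(\<integral>\<^sup>+w. ennreal \<bar>X w\<bar> \<partial>M) \<le> (\<integral>\<^sup>+w. 1 + (\<Sum>m. indicator (A m) w) \<partial>M)"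
  proof (rule nn_integral_mono)
    fix w assume w: "w \<in> space M"
    have e: "(\<lambda>m. ennreal (indicator {y. real (Suc m) \<le> \<bar>y\<bar>} (X w))) = (\<lambda>m. indicator (A m) w)"
      using w by (auto simp: A_def indicator_def)
    show "ennreal \<bar>X w\<bar> \<le> 1 + (\<Sum>m. indicator (A m) w)"
      using ennreal_le_count[of "X w"] unfolding e .
  qed
  also have "\<dots> = 1 + (\<Sum>m. emeasure M (A m))"
    using Asets by (subst nn_integral_add) (auto simp: nn_integral_suminf emeasure_space_1)
  also have "\<dots> \<le> 1 + (\<Sum>m. ennreal (f m))"
    by (intro add_left_mono suminf_le summableI tb)
  also have "\<dots> = ennreal (1 + suminf f)"
    using fnn fsum by (simp add: suminf_ennreal2 ennreal_plus suminf_nonneg)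
  finally show ?thesis unfolding f_def .
qed

lemma Z_moment:
  fixes X :: "'a \<Rightarrow> real"
  assumes P: "prob_space M" and Xm: "X \<in> borel_measurable M"
    and cfX: "\<And>\<theta>. (CLINT w|M. cis (\<theta> * X w)) = complex_of_real (exp (- c * \<bar>\<theta>^2 * R\<bar> powr (\<alpha>/2)))"
    and R: "R \<ge> 0" and c: "c \<ge> 0" and al: "\<alpha> > 1"
  shows "(\<integral>\<^sup>+w. ennreal \<bar>X w\<bar> \<partial>M) \<le> ennreal (1 + (\<Sum>m. 2 * (c * R powr (\<alpha>/2)) * (2 / real (Suc m)) powr \<alpha>))"
proof (rule moment_bound[OF P Xm cfX _ _ _ al])
  show "continuous_on UNIV (\<lambda>\<theta>. exp (- c * \<bar>\<theta>\<^sup>2 * R\<bar> powr (\<alpha> / 2)))"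
    using al by (intro continuous_intros continuous_on_powr') auto
  show "0 \<le> c * R powr (\<alpha> / 2)" using R c by simp
  fix \<theta> :: real
  have eq: "\<bar>\<theta>^2 * R\<bar> powr (\<alpha>/2) = R powr (\<alpha>/2) * \<bar>\<theta>\<bar> powr \<alpha>"
  proof (cases "\<theta> = 0")
    case True then show ?thesis by simp
  next
    case False
    have "\<bar>\<theta>^2 * R\<bar> = (\<bar>\<theta>\<bar> powr 2) * R" using R False
      by (simp add: abs_mult powr_realpow)
    then have "\<bar>\<theta>^2 * R\<bar> powr (\<alpha>/2) = (\<bar>\<theta>\<bar> powr 2) powr (\<alpha>/2) * R powr (\<alpha>/2)"
      using R by (simp add: powr_mult)
    also have "\<dots> = R powr (\<alpha>/2) * \<bar>\<theta>\<bar> powr \<alpha>" by (subst powr_powr) simp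
    finally show ?thesis .
  qed
  have "1 - exp (- (c * \<bar>\<theta>^2 * R\<bar> powr (\<alpha>/2))) \<le> c * \<bar>\<theta>^2 * R\<bar> powr (\<alpha>/2)"
    using exp_ge_add_one_self[of "- (c * \<bar>\<theta>^2 * R\<bar> powr (\<alpha>/2))"] by linarith
  then show "1 - exp (- c * \<bar>\<theta>\<^sup>2 * R\<bar> powr (\<alpha> / 2)) \<le> c * R powr (\<alpha> / 2) * \<bar>\<theta>\<bar> powr \<alpha>"
    by (simp add: eq mult.assoc)
qed

locale L4 =
  fixes M :: "'a measure" and \<alpha> :: real and R11 R12 R22 :: real
    and Z1 Z2 :: "int \<Rightarrow> 'a \<Rightarrow> real"
  assumes P: "prob_space M"
    and al1: "1 < \<alpha>" and al2: "\<alpha> < 2"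
    and R11: "R11 \<ge> 0" and R22: "R22 \<ge> 0"
    and meas1: "\<And>t. Z1 t \<in> borel_measurable M" and meas2: "\<And>t. Z2 t \<in> borel_measurable M"
    and ind: "prob_space.indep_vars M (\<lambda>_. borel) (\<lambda>t w. (Z1 t w, Z2 t w)) UNIV"
    and cf: "\<And>t \<theta>1 \<theta>2. (CLINT w|M. cis (\<theta>1 * Z1 t w + \<theta>2 * Z2 t w)) =
            complex_of_real (exp (- ((1/2) powr (\<alpha>/2)) *
              \<bar>\<theta>1^2 * R11 + 2 * \<theta>1 * \<theta>2 * R12 + \<theta>2^2 * R22\<bar> powr (\<alpha>/2)))"
begin

lemma Z_bounds:
  obtains B where "\<And>t. (\<integral>\<^sup>+w. ennreal \<bar>Z1 t w\<bar> \<partial>M) \<le> ennreal B"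
    "\<And>t. (\<integral>\<^sup>+w. ennreal \<bar>Z2 t w\<bar> \<partial>M) \<le> ennreal B"
proof -
  define B1 where "B1 = 1 + (\<Sum>m. 2 * ((1/2) powr (\<alpha>/2) * R11 powr (\<alpha>/2)) * (2 / real (Suc m)) powr \<alpha>)"
  define B2 where "B2 = 1 + (\<Sum>m. 2 * ((1/2) powr (\<alpha>/2) * R22 powr (\<alpha>/2)) * (2 / real (Suc m)) powr \<alpha>)"
  have 1: "(\<integral>\<^sup>+w. ennreal \<bar>Z1 t w\<bar> \<partial>M) \<le> ennreal B1" for t
    unfolding B1_def
  proof (rule Z_moment[OF P meas1 _ R11 _ al1])
    show "(CLINT w|M. cis (\<theta> * Z1 t w)) = complex_of_real (exp (- ((1/2) powr (\<alpha>/2)) * \<bar>\<theta>^2 * R11\<bar> powr (\<alpha>/2)))" for \<theta>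
      using cf[of \<theta> t 0] by simp
  qed simp
  have 2: "(\<integral>\<^sup>+w. ennreal \<bar>Z2 t w\<bar> \<partial>M) \<le> ennreal B2" for t
    unfolding B2_def
  proof (rule Z_moment[OF P meas2 _ R22 _ al1])
    show "(CLINT w|M. cis (\<theta> * Z2 t w)) = complex_of_real (exp (- ((1/2) powr (\<alpha>/2)) * \<bar>\<theta>^2 * R22\<bar> powr (\<alpha>/2)))" for \<theta>
      using cf[of 0 t \<theta>] by simp
  qed simp
  show ?thesis
    by (rule that[of "max B1 B2"]; rule order_trans[OF _ ennreal_leI[OF max.cobounded1]] order_trans[OF _ ennreal_leI[OF max.cobounded2]])
       (auto intro: 1 2 order_trans[OF 1] order_trans[OF 2])
qed

lemma AE_abs_summable:
  fixes b1 b2 :: "nat \<Rightarrow> real"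
  assumes bs: "summable (\<lambda>n. \<bar>b1 n\<bar> + \<bar>b2 n\<bar>)"
  shows "AE w in M. summable (\<lambda>n. \<bar>b1 n\<bar> * \<bar>Z1 (T - int n) w\<bar> + \<bar>b2 n\<bar> * \<bar>Z2 (T - int n) w\<bar>)"
proof -
  interpret prob_space M by (rule P)
  obtain B where B1: "\<And>t. (\<integral>\<^sup>+w. ennreal \<bar>Z1 t w\<bar> \<partial>M) \<le> ennreal B"
    and B2: "\<And>t. (\<integral>\<^sup>+w. ennreal \<bar>Z2 t w\<bar> \<partial>M) \<le> ennreal B"
    using Z_bounds by blast
  define B' where "B' = max B 0"
  have B'0: "B' \<ge> 0" unfolding B'_def by simp
  have B1': "(\<integral>\<^sup>+w. ennreal \<bar>Z1 t w\<bar> \<partial>M) \<le> ennreal B'" for t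
    using B1[of t] ennreal_leI[of B B'] unfolding B'_def by (meson max.cobounded1 order_trans)
  have B2': "(\<integral>\<^sup>+w. ennreal \<bar>Z2 t w\<bar> \<partial>M) \<le> ennreal B'" for t
    using B2[of t] ennreal_leI[of B B'] unfolding B'_def by (meson max.cobounded1 order_trans)
  define F where "F n w = ennreal (\<bar>b1 n\<bar> * \<bar>Z1 (T - int n) w\<bar> + \<bar>b2 n\<bar> * \<bar>Z2 (T - int n) w\<bar>)" for n w
  have Fm: "F n \<in> borel_measurable M" for n unfolding F_def using meas1 meas2 by measurable
  have Fb: "(\<integral>\<^sup>+w. F n w \<partial>M) \<le> ennreal ((\<bar>b1 n\<bar> + \<bar>b2 n\<bar>) * B')" for n
  proof -
    have "(\<integral>\<^sup>+w. F n w \<partial>M) = (\<integral>\<^sup>+w. ennreal \<bar>b1 n\<bar> * ennreal \<bar>Z1 (T - int n) w\<bar> + ennreal \<bar>b2 n\<bar> * ennreal \<bar>Z2 (T - int n) w\<bar> \<partial>M)"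
      unfolding F_def by (intro nn_integral_cong) (simp add: ennreal_plus ennreal_mult)
    also have "\<dots> = ennreal \<bar>b1 n\<bar> * (\<integral>\<^sup>+w. ennreal \<bar>Z1 (T - int n) w\<bar> \<partial>M) + ennreal \<bar>b2 n\<bar> * (\<integral>\<^sup>+w. ennreal \<bar>Z2 (T - int n) w\<bar> \<partial>M)"
      using meas1 meas2 by (subst nn_integral_add) (auto simp: nn_integral_cmult)
    also have "\<dots> \<le> ennreal \<bar>b1 n\<bar> * ennreal B' + ennreal \<bar>b2 n\<bar> * ennreal B'"
      by (intro add_mono mult_left_mono B1' B2') auto
    also have "\<dots> = ennreal ((\<bar>b1 n\<bar> + \<bar>b2 n\<bar>) * B')"
    proof -
      have "ennreal ((\<bar>b1 n\<bar> + \<bar>b2 n\<bar>) * B') = ennreal (\<bar>b1 n\<bar> * B' + \<bar>b2 n\<bar> * B')"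
        by (simp add: distrib_right)
      also have "\<dots> = ennreal (\<bar>b1 n\<bar> * B') + ennreal (\<bar>b2 n\<bar> * B')"
        using B'0 by (intro ennreal_plus) auto
      also have "\<dots> = ennreal \<bar>b1 n\<bar> * ennreal B' + ennreal \<bar>b2 n\<bar> * ennreal B'"
        using B'0 by (simp add: ennreal_mult)
      finally show ?thesis by simp
    qed
    finally show ?thesis .
  qed
  have "(\<integral>\<^sup>+w. (\<Sum>n. F n w) \<partial>M) = (\<Sum>n. \<integral>\<^sup>+w. F n w \<partial>M)"
    using Fm by (simp add: nn_integral_suminf)
  also have "\<dots> \<le> (\<Sum>n. ennreal ((\<bar>b1 n\<bar> + \<bar>b2 n\<bar>) * B'))"
    by (rule suminf_le[OF Fb summableI summableI])
  also have "\<dots> = ennreal (\<Sum>n. (\<bar>b1 n\<bar> + \<bar>b2 n\<bar>) * B')"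
    using bs B'0 by (intro suminf_ennreal2 summable_mult2) auto
  finally have le: "(\<integral>\<^sup>+w. (\<Sum>n. F n w) \<partial>M) \<le> ennreal (\<Sum>n. (\<bar>b1 n\<bar> + \<bar>b2 n\<bar>) * B')" .
  have "(\<integral>\<^sup>+w. (\<Sum>n. F n w) \<partial>M) \<noteq> \<infinity>"
    using neq_top_trans[OF ennreal_neq_top le] by simp
  then have "AE w in M. (\<Sum>n. F n w) \<noteq> \<infinity>"
    using Fm by (intro nn_integral_PInf_AE) auto
  then show ?thesis
    by eventually_elim (auto simp: F_def intro: summable_suminf_not_top)
qed

lemma Q_bound: "\<bar>Qf R11 R12 R22 u v\<bar> \<le> (R11 + \<bar>R12\<bar> + R22) * (\<bar>u\<bar> + \<bar>v\<bar>)^2"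
proof -
  have "\<bar>Qf R11 R12 R22 u v\<bar> \<le> u^2 * R11 + 2 * (\<bar>u\<bar> * \<bar>v\<bar>) * \<bar>R12\<bar> + v^2 * R22"
  proof -
    have "\<bar>2 * u * v * R12\<bar> = 2 * (\<bar>u\<bar> * \<bar>v\<bar>) * \<bar>R12\<bar>" by (simp add: abs_mult)
    moreover have "u^2 * R11 \<ge> 0" "v^2 * R22 \<ge> 0" using R11 R22 by auto
    ultimately show ?thesis unfolding Qf_def by linarith
  qed
  also have "\<dots> \<le> (R11 + \<bar>R12\<bar> + R22) * (u^2 + 2 * (\<bar>u\<bar> * \<bar>v\<bar>) + v^2)"
  proof -
    have a0: "R11 \<le> R11 + \<bar>R12\<bar> + R22" using R22 by simp
    have a: "u^2 * R11 \<le> (R11 + \<bar>R12\<bar> + R22) * u^2"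
      using mult_right_mono[OF a0, of "u^2"] by (simp add: mult.commute)
    have b0: "\<bar>R12\<bar> \<le> R11 + \<bar>R12\<bar> + R22" using R11 R22 by simp
    have b: "2 * (\<bar>u\<bar> * \<bar>v\<bar>) * \<bar>R12\<bar> \<le> (R11 + \<bar>R12\<bar> + R22) * (2 * (\<bar>u\<bar> * \<bar>v\<bar>))"
      using mult_right_mono[OF b0, of "2 * (\<bar>u\<bar> * \<bar>v\<bar>)"] by (simp add: mult.commute)
    have c0: "R22 \<le> R11 + \<bar>R12\<bar> + R22" using R11 by simp
    have c: "v^2 * R22 \<le> (R11 + \<bar>R12\<bar> + R22) * v^2"
      using mult_right_mono[OF c0, of "v^2"] by (simp add: mult.commute)
    show ?thesis using a b c by (simp add: distrib_left)
  qed
  also have "\<dots> = (R11 + \<bar>R12\<bar> + R22) * (\<bar>u\<bar> + \<bar>v\<bar>)^2"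
    by (simp add: power2_eq_square algebra_simps)
  finally show ?thesis .
qed

lemma psi_summable:
  fixes b1 b2 :: "nat \<Rightarrow> real"
  assumes bs: "summable (\<lambda>n. \<bar>b1 n\<bar> + \<bar>b2 n\<bar>)"
  shows "summable (\<lambda>n. \<bar>Qf R11 R12 R22 (b1 n) (b2 n)\<bar> powr (\<alpha>/2))"
proof (rule summable_comparison_test_ev)
  define K where "K = R11 + \<bar>R12\<bar> + R22"
  have K0: "K \<ge> 0" unfolding K_def using R11 R22 by simp
  show "summable (\<lambda>n. K powr (\<alpha>/2) * (\<bar>b1 n\<bar> + \<bar>b2 n\<bar>))" using bs by (rule summable_mult)
  have "(\<lambda>n. \<bar>b1 n\<bar> + \<bar>b2 n\<bar>) \<longlonglongrightarrow> 0" using bs by (rule summable_LIMSEQ_zero)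
  then have "eventually (\<lambda>n. \<bar>b1 n\<bar> + \<bar>b2 n\<bar> < 1) sequentially"
    by (rule order_tendstoD(2)) simp
  then show "eventually (\<lambda>n. norm (\<bar>Qf R11 R12 R22 (b1 n) (b2 n)\<bar> powr (\<alpha>/2)) \<le> K powr (\<alpha>/2) * (\<bar>b1 n\<bar> + \<bar>b2 n\<bar>)) sequentially"
  proof eventually_elim
    case (elim n)
    define x where "x = \<bar>b1 n\<bar> + \<bar>b2 n\<bar>"
    have x0: "x \<ge> 0" and x1: "x \<le> 1" using elim unfolding x_def by auto
    have "\<bar>Qf R11 R12 R22 (b1 n) (b2 n)\<bar> powr (\<alpha>/2) \<le> (K * x^2) powr (\<alpha>/2)"
      using Q_bound[of "b1 n" "b2 n"] al1 unfolding K_def x_def by (intro powr_mono2) auto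
    also have "\<dots> = K powr (\<alpha>/2) * (x^2) powr (\<alpha>/2)" using K0 by (simp add: powr_mult)
    also have "\<dots> = K powr (\<alpha>/2) * x powr \<alpha>"
      using x0 by (simp add: powr_powr powr_realpow[symmetric] flip: powr_numeral)
    also have "\<dots> \<le> K powr (\<alpha>/2) * x"
    proof (cases "x = 0")
      case False then show ?thesis using powr_le_one_le[of x \<alpha>] x0 x1 al1 by (simp add: mult_left_mono)
    qed simp
    finally show ?case by (simp add: x_def)
  qed
qed

lemma series_cf:
  fixes b1 b2 :: "nat \<Rightarrow> real" and Y :: "'a \<Rightarrow> real"
  assumes bs: "summable (\<lambda>n. \<bar>b1 n\<bar> + \<bar>b2 n\<bar>)" and Ym: "Y \<in> borel_measurable M"
    and sm: "AE w in M. (\<lambda>n. b1 n * Z1 (T - int n) w + b2 n * Z2 (T - int n) w) sums Y w"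
  shows "(CLINT w|M. cis (Y w)) = complex_of_real (exp (- ((1/2) powr (\<alpha>/2)) * (\<Sum>n. \<bar>Qf R11 R12 R22 (b1 n) (b2 n)\<bar> powr (\<alpha>/2))))"
proof -
  interpret prob_space M by (rule P)
  define S where "S N w = (\<Sum>n<N. b1 n * Z1 (T - int n) w + b2 n * Z2 (T - int n) w)" for N w
  have fin: "(CLINT w|M. cis (S N w)) = complex_of_real (exp (- ((1/2) powr (\<alpha>/2)) * (\<Sum>n<N. \<bar>Qf R11 R12 R22 (b1 n) (b2 n)\<bar> powr (\<alpha>/2))))" for N
    unfolding S_def
    by (rule finite_cf[OF P meas1 meas2 ind, where \<psi>="\<lambda>u v. \<bar>Qf R11 R12 R22 u v\<bar> powr (\<alpha>/2)"])
       (unfold Qf_def, rule cf)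
  have L1: "(\<lambda>N. CLINT w|M. cis (S N w)) \<longlonglongrightarrow> (CLINT w|M. cis (Y w))"
  proof (rule integral_dominated_convergence[where w="\<lambda>_. 1"])
    show "(\<lambda>w. cis (Y w)) \<in> borel_measurable M" using Ym unfolding cis_conv_exp by measurable
    show "(\<lambda>w. cis (S N w)) \<in> borel_measurable M" for N
      unfolding S_def cis_conv_exp using meas1 meas2 by measurable
    show "AE w in M. (\<lambda>N. cis (S N w)) \<longlonglongrightarrow> cis (Y w)"
      using sm
    proof eventually_elim
      case (elim w)
      then have "(\<lambda>N. S N w) \<longlonglongrightarrow> Y w" unfolding S_def sums_def .
      then show ?case unfolding cis_conv_exp by (intro tendsto_intros)
    qed
  qed auto
  have L2: "(\<lambda>N. complex_of_real (exp (- ((1/2) powr (\<alpha>/2)) * (\<Sum>n<N. \<bar>Qf R11 R12 R22 (b1 n) (b2 n)\<bar> powr (\<alpha>/2)))))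
     \<longlonglongrightarrow> complex_of_real (exp (- ((1/2) powr (\<alpha>/2)) * (\<Sum>n. \<bar>Qf R11 R12 R22 (b1 n) (b2 n)\<bar> powr (\<alpha>/2))))"
    using summable_LIMSEQ[OF psi_summable[OF bs]] by (intro tendsto_intros)
  show ?thesis using LIMSEQ_unique[OF L1] L2 unfolding fin by blast
qed

lemma AE_summable:
  fixes b1 b2 :: "nat \<Rightarrow> real"
  assumes bs: "summable (\<lambda>n. \<bar>b1 n\<bar> + \<bar>b2 n\<bar>)"
  shows "AE w in M. summable (\<lambda>n. b1 n * Z1 (T - int n) w + b2 n * Z2 (T - int n) w)"
  using AE_abs_summable[OF bs, of T]
proof eventually_elim
  case (elim w)
  show ?case
  proof (rule summable_comparison_test'[OF elim])
    fix n :: nat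
    show "norm (b1 n * Z1 (T - int n) w + b2 n * Z2 (T - int n) w) \<le> \<bar>b1 n\<bar> * \<bar>Z1 (T - int n) w\<bar> + \<bar>b2 n\<bar> * \<bar>Z2 (T - int n) w\<bar>"
      by (simp add: abs_mult[symmetric] abs_triangle_ineq)
  qed
qed

end

lemma shift_sums:
  fixes f :: "nat \<Rightarrow> real"
  assumes "f sums s"
  shows "(\<lambda>n. if h \<le> n then f (n - h) else 0) sums s"
proof -
  have "(\<lambda>i. (\<lambda>n. if h \<le> n then f (n - h) else 0) (i + h)) = f" by auto
  moreover have "(\<Sum>i<h. (\<lambda>n. if h \<le> n then f (n - h) else 0) i) = 0" by simp
  ultimately show ?thesis using sums_iff_shift[of "\<lambda>n. if h \<le> n then f (n - h) else 0" h s] assms by simp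
qed

lemma shift_summable:
  fixes f :: "nat \<Rightarrow> real"
  assumes "summable f"
  shows "summable (\<lambda>n. if h \<le> n then f (n - h) else 0)"
  using shift_sums[OF summable_sums[OF assms], of h] sums_summable by blast

context L4 begin

lemma X_facts:
  fixes a b :: "nat \<Rightarrow> real" and X :: "int \<Rightarrow> 'a \<Rightarrow> real"
  assumes bs: "summable (\<lambda>j. \<bar>a j\<bar> + \<bar>b j\<bar>)"
    and Xdef: "\<And>t w. X t w = (\<Sum>j. a j * Z1 (t - int j) w + b j * Z2 (t - int j) w)"
  shows "X t \<in> borel_measurable M"
    and "AE w in M. (\<lambda>j. a j * Z1 (t - int j) w + b j * Z2 (t - int j) w) sums X t w"
proof -
  have "X t = (\<lambda>w. \<Sum>j. a j * Z1 (t - int j) w + b j * Z2 (t - int j) w)" by (rule ext) (rule Xdef)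
  then show "X t \<in> borel_measurable M" using meas1 meas2 by simp
  show "AE w in M. (\<lambda>j. a j * Z1 (t - int j) w + b j * Z2 (t - int j) w) sums X t w"
    using AE_summable[OF bs, of t] by eventually_elim (simp add: Xdef summable_sums)
qed

lemma cf_X:
  fixes a b :: "nat \<Rightarrow> real" and X :: "int \<Rightarrow> 'a \<Rightarrow> real"
  assumes bs: "summable (\<lambda>j. \<bar>a j\<bar> + \<bar>b j\<bar>)"
    and Xdef: "\<And>t w. X t w = (\<Sum>j. a j * Z1 (t - int j) w + b j * Z2 (t - int j) w)"
  shows "(CLINT w|M. cis (X t w)) = complex_of_real (exp (- ((1/2) powr (\<alpha>/2)) * (\<Sum>n. \<bar>Qf R11 R12 R22 (a n) (b n)\<bar> powr (\<alpha>/2))))"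
  by (rule series_cf[OF bs X_facts[OF bs Xdef]])

lemma cf_negX:
  fixes a b :: "nat \<Rightarrow> real" and X :: "int \<Rightarrow> 'a \<Rightarrow> real"
  assumes bs: "summable (\<lambda>j. \<bar>a j\<bar> + \<bar>b j\<bar>)"
    and Xdef: "\<And>t w. X t w = (\<Sum>j. a j * Z1 (t - int j) w + b j * Z2 (t - int j) w)"
  shows "(CLINT w|M. cis (- X t w)) = complex_of_real (exp (- ((1/2) powr (\<alpha>/2)) * (\<Sum>n. \<bar>Qf R11 R12 R22 (a n) (b n)\<bar> powr (\<alpha>/2))))"
proof -
  have bs': "summable (\<lambda>j. \<bar>- a j\<bar> + \<bar>- b j\<bar>)" using bs by simp
  have Ym: "(\<lambda>w. - X t w) \<in> borel_measurable M" using X_facts(1)[OF bs Xdef] by measurable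
  have sm: "AE w in M. (\<lambda>j. (- a j) * Z1 (t - int j) w + (- b j) * Z2 (t - int j) w) sums (- X t w)"
    using X_facts(2)[OF bs Xdef, of t]
  proof eventually_elim
    case (elim w)
    then show ?case using sums_minus[OF elim] by (simp add: algebra_simps)
  qed
  have q: "\<bar>Qf R11 R12 R22 (- a n) (- b n)\<bar> = \<bar>Qf R11 R12 R22 (a n) (b n)\<bar>" for n
    by (simp add: Qf_def)
  show ?thesis using series_cf[OF bs' Ym sm] by (simp only: q)
qed

lemma part_a:
  fixes A1 A2 A3 A4 :: "nat \<Rightarrow> real" and X1 X2 :: "int \<Rightarrow> 'a \<Rightarrow> real" and t :: int and h :: nat
  assumes s12: "summable (\<lambda>j. \<bar>A1 j\<bar> + \<bar>A2 j\<bar>)"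
    and s34: "summable (\<lambda>j. \<bar>A3 j\<bar> + \<bar>A4 j\<bar>)"
    and X1def: "\<And>t w. X1 t w = (\<Sum>j. A1 j * Z1 (t - int j) w + A2 j * Z2 (t - int j) w)"
    and X2def: "\<And>t w. X2 t w = (\<Sum>j. A3 j * Z1 (t - int j) w + A4 j * Z2 (t - int j) w)"
  shows "CD M (X1 t) (X2 (t + int h)) = complex_of_real (
         (1/2) powr (\<alpha>/2) * (\<Sum>j. \<bar>Qf R11 R12 R22 (A1 j) (A2 j)\<bar> powr (\<alpha>/2))
       + (1/2) powr (\<alpha>/2) * (\<Sum>j. \<bar>Qf R11 R12 R22 (A3 (j + h)) (A4 (j + h))\<bar> powr (\<alpha>/2))
       - (1/2) powr (\<alpha>/2) * (\<Sum>j. \<bar>Qf R11 R12 R22 (A1 j - A3 (j + h))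
                                         (A2 j - A4 (j + h))\<bar> powr (\<alpha>/2)))"
proof -
  define c where "c = (1/2) powr (\<alpha>/2)"
  define q where "q u v = \<bar>Qf R11 R12 R22 u v\<bar> powr (\<alpha>/2)" for u v
  define b1 where "b1 n = (if h \<le> n then A1 (n - h) else 0) - A3 n" for n
  define b2 where "b2 n = (if h \<le> n then A2 (n - h) else 0) - A4 n" for n
  have bs: "summable (\<lambda>n. \<bar>b1 n\<bar> + \<bar>b2 n\<bar>)"
  proof (rule summable_comparison_test'[OF summable_add[OF shift_summable[OF s12, of h] s34]])
    fix n :: nat
    show "norm (\<bar>b1 n\<bar> + \<bar>b2 n\<bar>) \<le> (if h \<le> n then \<bar>A1 (n - h)\<bar> + \<bar>A2 (n - h)\<bar> else 0) + (\<bar>A3 n\<bar> + \<bar>A4 n\<bar>)"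
      unfolding b1_def b2_def
      using abs_triangle_ineq4[of "A1 (n - h)" "A3 n"] abs_triangle_ineq4[of "A2 (n - h)" "A4 n"]
      by (cases "h \<le> n") auto
  qed
  have Ym: "(\<lambda>w. X1 t w - X2 (t + int h) w) \<in> borel_measurable M"
    using X_facts(1)[OF s12 X1def, of t] X_facts(1)[OF s34 X2def, of "t + int h"] by measurable
  have sm: "AE w in M. (\<lambda>n. b1 n * Z1 (t + int h - int n) w + b2 n * Z2 (t + int h - int n) w) sums (X1 t w - X2 (t + int h) w)"
    using X_facts(2)[OF s12 X1def, of t] X_facts(2)[OF s34 X2def, of "t + int h"]
  proof eventually_elim
    case (elim w)
    have "(\<lambda>n. (if h \<le> n then (\<lambda>j. A1 j * Z1 (t - int j) w + A2 j * Z2 (t - int j) w) (n - h) else 0)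
        - (A3 n * Z1 (t + int h - int n) w + A4 n * Z2 (t + int h - int n) w)) sums (X1 t w - X2 (t + int h) w)"
      by (intro sums_diff shift_sums elim)
    moreover have "(\<lambda>n. (if h \<le> n then (\<lambda>j. A1 j * Z1 (t - int j) w + A2 j * Z2 (t - int j) w) (n - h) else 0)
        - (A3 n * Z1 (t + int h - int n) w + A4 n * Z2 (t + int h - int n) w))
       = (\<lambda>n. b1 n * Z1 (t + int h - int n) w + b2 n * Z2 (t + int h - int n) w)"
    proof
      fix n
      show "(if h \<le> n then (\<lambda>j. A1 j * Z1 (t - int j) w + A2 j * Z2 (t - int j) w) (n - h) else 0)
        - (A3 n * Z1 (t + int h - int n) w + A4 n * Z2 (t + int h - int n) w)
        = b1 n * Z1 (t + int h - int n) w + b2 n * Z2 (t + int h - int n) w"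
      proof (cases "h \<le> n")
        case True
        then have "t - int (n - h) = t + int h - int n" by (simp add: of_nat_diff)
        then show ?thesis using True unfolding b1_def b2_def by (simp add: algebra_simps)
      qed (simp add: b1_def b2_def algebra_simps)
    qed
    ultimately show ?case by simp
  qed
  have E13: "(CLINT w|M. cis (X1 t w - X2 (t + int h) w)) = complex_of_real (exp (- c * (\<Sum>n. q (b1 n) (b2 n))))"
    unfolding c_def q_def by (rule series_cf[OF bs Ym sm])
  have E1: "(CLINT w|M. cis (X1 t w)) = complex_of_real (exp (- c * (\<Sum>n. q (A1 n) (A2 n))))"
    unfolding c_def q_def by (rule cf_X[OF s12 X1def])
  have E3: "(CLINT w|M. cis (- X2 (t + int h) w)) = complex_of_real (exp (- c * (\<Sum>n. q (A3 n) (A4 n))))"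
    unfolding c_def q_def by (rule cf_negX[OF s34 X2def])
  have qs: "summable (\<lambda>n. q (b1 n) (b2 n))" unfolding q_def by (rule psi_summable[OF bs])
  have qs3: "summable (\<lambda>n. q (A3 n) (A4 n))" unfolding q_def by (rule psi_summable[OF s34])
  have split1: "(\<Sum>n. q (b1 n) (b2 n)) = (\<Sum>j. q (A1 j - A3 (j + h)) (A2 j - A4 (j + h))) + (\<Sum>n<h. q (A3 n) (A4 n))"
  proof -
    have "(\<Sum>n. q (b1 n) (b2 n)) = (\<Sum>j. q (b1 (j + h)) (b2 (j + h))) + (\<Sum>n<h. q (b1 n) (b2 n))"
      by (rule suminf_split_initial_segment[OF qs])
    moreover have "(\<lambda>j. q (b1 (j + h)) (b2 (j + h))) = (\<lambda>j. q (A1 j - A3 (j + h)) (A2 j - A4 (j + h)))"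
      by (simp add: b1_def b2_def)
    moreover have "(\<Sum>n<h. q (b1 n) (b2 n)) = (\<Sum>n<h. q (A3 n) (A4 n))"
      by (intro sum.cong) (auto simp: b1_def b2_def q_def Qf_def)
    ultimately show ?thesis by simp
  qed
  have split3: "(\<Sum>n. q (A3 n) (A4 n)) = (\<Sum>j. q (A3 (j + h)) (A4 (j + h))) + (\<Sum>n<h. q (A3 n) (A4 n))"
    by (rule suminf_split_initial_segment[OF qs3])
  have "CD M (X1 t) (X2 (t + int h)) = complex_of_real ((- c * (\<Sum>n. q (b1 n) (b2 n))) - (- c * (\<Sum>n. q (A1 n) (A2 n))) - (- c * (\<Sum>n. q (A3 n) (A4 n))))"
    unfolding CD_def E13 E1 E3 by (simp add: Ln_of_real)
  also have "\<dots> = complex_of_real (c * (\<Sum>j. q (A1 j) (A2 j)) + c * (\<Sum>j. q (A3 (j + h)) (A4 (j + h))) - c * (\<Sum>j. q (A1 j - A3 (j + h)) (A2 j - A4 (j + h))))"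
    unfolding split1 split3 by (simp add: algebra_simps)
  finally show ?thesis unfolding c_def q_def .
qed

lemma part_b:
  fixes A1 A2 A3 A4 :: "nat \<Rightarrow> real" and X1 X2 :: "int \<Rightarrow> 'a \<Rightarrow> real" and t :: int and h :: nat
  assumes s12: "summable (\<lambda>j. \<bar>A1 j\<bar> + \<bar>A2 j\<bar>)"
    and s34: "summable (\<lambda>j. \<bar>A3 j\<bar> + \<bar>A4 j\<bar>)"
    and X1def: "\<And>t w. X1 t w = (\<Sum>j. A1 j * Z1 (t - int j) w + A2 j * Z2 (t - int j) w)"
    and X2def: "\<And>t w. X2 t w = (\<Sum>j. A3 j * Z1 (t - int j) w + A4 j * Z2 (t - int j) w)"
  shows "CD M (X1 t) (X2 (t - int h)) = complex_of_real (
         (1/2) powr (\<alpha>/2) * (\<Sum>j. \<bar>Qf R11 R12 R22 (A1 (j + h)) (A2 (j + h))\<bar> powr (\<alpha>/2))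
       + (1/2) powr (\<alpha>/2) * (\<Sum>j. \<bar>Qf R11 R12 R22 (A3 j) (A4 j)\<bar> powr (\<alpha>/2))
       - (1/2) powr (\<alpha>/2) * (\<Sum>j. \<bar>Qf R11 R12 R22 (A1 (j + h) - A3 j)
                                         (A2 (j + h) - A4 j)\<bar> powr (\<alpha>/2)))"
proof -
  define c where "c = (1/2) powr (\<alpha>/2)"
  define q where "q u v = \<bar>Qf R11 R12 R22 u v\<bar> powr (\<alpha>/2)" for u v
  define b1 where "b1 n = A1 n - (if h \<le> n then A3 (n - h) else 0)" for n
  define b2 where "b2 n = A2 n - (if h \<le> n then A4 (n - h) else 0)" for n
  have bs: "summable (\<lambda>n. \<bar>b1 n\<bar> + \<bar>b2 n\<bar>)"
  proof (rule summable_comparison_test'[OF summable_add[OF s12 shift_summable[OF s34, of h]]])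
    fix n :: nat
    show "norm (\<bar>b1 n\<bar> + \<bar>b2 n\<bar>) \<le> (\<bar>A1 n\<bar> + \<bar>A2 n\<bar>) + (if h \<le> n then \<bar>A3 (n - h)\<bar> + \<bar>A4 (n - h)\<bar> else 0)"
      unfolding b1_def b2_def
      using abs_triangle_ineq4[of "A1 n" "A3 (n - h)"] abs_triangle_ineq4[of "A2 n" "A4 (n - h)"]
      by (cases "h \<le> n") auto
  qed
  have Ym: "(\<lambda>w. X1 t w - X2 (t - int h) w) \<in> borel_measurable M"
    using X_facts(1)[OF s12 X1def, of t] X_facts(1)[OF s34 X2def, of "t - int h"] by measurable
  have sm: "AE w in M. (\<lambda>n. b1 n * Z1 (t - int n) w + b2 n * Z2 (t - int n) w) sums (X1 t w - X2 (t - int h) w)"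
    using X_facts(2)[OF s12 X1def, of t] X_facts(2)[OF s34 X2def, of "t - int h"]
  proof eventually_elim
    case (elim w)
    have "(\<lambda>n. (A1 n * Z1 (t - int n) w + A2 n * Z2 (t - int n) w) -
        (if h \<le> n then (\<lambda>j. A3 j * Z1 (t - int h - int j) w + A4 j * Z2 (t - int h - int j) w) (n - h) else 0))
        sums (X1 t w - X2 (t - int h) w)"
      by (intro sums_diff shift_sums elim)
    moreover have "(\<lambda>n. (A1 n * Z1 (t - int n) w + A2 n * Z2 (t - int n) w) -
        (if h \<le> n then (\<lambda>j. A3 j * Z1 (t - int h - int j) w + A4 j * Z2 (t - int h - int j) w) (n - h) else 0))
       = (\<lambda>n. b1 n * Z1 (t - int n) w + b2 n * Z2 (t - int n) w)"
    proof
      fix n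
      show "(A1 n * Z1 (t - int n) w + A2 n * Z2 (t - int n) w) -
        (if h \<le> n then (\<lambda>j. A3 j * Z1 (t - int h - int j) w + A4 j * Z2 (t - int h - int j) w) (n - h) else 0)
        = b1 n * Z1 (t - int n) w + b2 n * Z2 (t - int n) w"
      proof (cases "h \<le> n")
        case True
        then have "t - int h - int (n - h) = t - int n" by (simp add: of_nat_diff)
        then show ?thesis using True unfolding b1_def b2_def by (simp add: algebra_simps)
      qed (simp add: b1_def b2_def algebra_simps)
    qed
    ultimately show ?case by simp
  qed
  have E13: "(CLINT w|M. cis (X1 t w - X2 (t - int h) w)) = complex_of_real (exp (- c * (\<Sum>n. q (b1 n) (b2 n))))"
    unfolding c_def q_def by (rule series_cf[OF bs Ym sm])
  have E1: "(CLINT w|M. cis (X1 t w)) = complex_of_real (exp (- c * (\<Sum>n. q (A1 n) (A2 n))))"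
    unfolding c_def q_def by (rule cf_X[OF s12 X1def])
  have E3: "(CLINT w|M. cis (- X2 (t - int h) w)) = complex_of_real (exp (- c * (\<Sum>n. q (A3 n) (A4 n))))"
    unfolding c_def q_def by (rule cf_negX[OF s34 X2def])
  have qs: "summable (\<lambda>n. q (b1 n) (b2 n))" unfolding q_def by (rule psi_summable[OF bs])
  have qs1: "summable (\<lambda>n. q (A1 n) (A2 n))" unfolding q_def by (rule psi_summable[OF s12])
  have split1: "(\<Sum>n. q (b1 n) (b2 n)) = (\<Sum>j. q (A1 (j + h) - A3 j) (A2 (j + h) - A4 j)) + (\<Sum>n<h. q (A1 n) (A2 n))"
  proof -
    have "(\<Sum>n. q (b1 n) (b2 n)) = (\<Sum>j. q (b1 (j + h)) (b2 (j + h))) + (\<Sum>n<h. q (b1 n) (b2 n))"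
      by (rule suminf_split_initial_segment[OF qs])
    moreover have "(\<lambda>j. q (b1 (j + h)) (b2 (j + h))) = (\<lambda>j. q (A1 (j + h) - A3 j) (A2 (j + h) - A4 j))"
      by (simp add: b1_def b2_def)
    moreover have "(\<Sum>n<h. q (b1 n) (b2 n)) = (\<Sum>n<h. q (A1 n) (A2 n))"
      by (intro sum.cong) (auto simp: b1_def b2_def)
    ultimately show ?thesis by simp
  qed
  have split3: "(\<Sum>n. q (A1 n) (A2 n)) = (\<Sum>j. q (A1 (j + h)) (A2 (j + h))) + (\<Sum>n<h. q (A1 n) (A2 n))"
    by (rule suminf_split_initial_segment[OF qs1])
  have "CD M (X1 t) (X2 (t - int h)) = complex_of_real ((- c * (\<Sum>n. q (b1 n) (b2 n))) - (- c * (\<Sum>n. q (A1 n) (A2 n))) - (- c * (\<Sum>n. q (A3 n) (A4 n))))"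
    unfolding CD_def E13 E1 E3 by (simp add: Ln_of_real)
  also have "\<dots> = complex_of_real (c * (\<Sum>j. q (A1 (j + h)) (A2 (j + h))) + c * (\<Sum>j. q (A3 j) (A4 j)) - c * (\<Sum>j. q (A1 (j + h) - A3 j) (A2 (j + h) - A4 j)))"
    unfolding split1 split3 by (simp add: algebra_simps)
  finally show ?thesis unfolding c_def q_def .
qed

end

theorem lemma4p1:
  fixes M :: "'a measure" and \<alpha> :: real and \<Theta> :: "real^2^2"
    and R11 R12 R22 :: real
    and Z1 Z2 :: "int \<Rightarrow> 'a \<Rightarrow> real"
    and X1 X2 :: "int \<Rightarrow> 'a \<Rightarrow> real"
  assumes "prob_space M"
    and "1 < \<alpha>" and "\<alpha> < 2"
    and "summable (\<lambda>j. \<bar>a1 \<Theta> j\<bar> + \<bar>a2 \<Theta> j\<bar>)"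
    and "summable (\<lambda>j. \<bar>a3 \<Theta> j\<bar> + \<bar>a4 \<Theta> j\<bar>)"
    and "R11 \<ge> 0" and "R22 \<ge> 0" and "R12^2 \<le> R11 * R22"
    and "\<And>t. Z1 t \<in> borel_measurable M" and "\<And>t. Z2 t \<in> borel_measurable M"
    and "prob_space.indep_vars M (\<lambda>_. borel) (\<lambda>t w. (Z1 t w, Z2 t w)) UNIV"
    and "\<And>t \<theta>1 \<theta>2. (CLINT w|M. cis (\<theta>1 * Z1 t w + \<theta>2 * Z2 t w)) =
            complex_of_real (exp (- ((1/2) powr (\<alpha>/2)) *
              \<bar>\<theta>1^2 * R11 + 2 * \<theta>1 * \<theta>2 * R12 + \<theta>2^2 * R22\<bar> powr (\<alpha>/2)))"
    and "\<And>t w. X1 t w = (\<Sum>j. a1 \<Theta> j * Z1 (t - int j) w + a2 \<Theta> j * Z2 (t - int j) w)"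
    and "\<And>t w. X2 t w = (\<Sum>j. a3 \<Theta> j * Z1 (t - int j) w + a4 \<Theta> j * Z2 (t - int j) w)"
  shows "\<forall>(t::int) (h::nat).
     CD M (X1 t) (X2 (t + int h)) = complex_of_real (
         (1/2) powr (\<alpha>/2) * (\<Sum>j. \<bar>Qf R11 R12 R22 (a1 \<Theta> j) (a2 \<Theta> j)\<bar> powr (\<alpha>/2))
       + (1/2) powr (\<alpha>/2) * (\<Sum>j. \<bar>Qf R11 R12 R22 (a3 \<Theta> (j + h)) (a4 \<Theta> (j + h))\<bar> powr (\<alpha>/2))
       - (1/2) powr (\<alpha>/2) * (\<Sum>j. \<bar>Qf R11 R12 R22 (a1 \<Theta> j - a3 \<Theta> (j + h))
                                         (a2 \<Theta> j - a4 \<Theta> (j + h))\<bar> powr (\<alpha>/2)))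
   \<and> CD M (X1 t) (X2 (t - int h)) = complex_of_real (
         (1/2) powr (\<alpha>/2) * (\<Sum>j. \<bar>Qf R11 R12 R22 (a1 \<Theta> (j + h)) (a2 \<Theta> (j + h))\<bar> powr (\<alpha>/2))
       + (1/2) powr (\<alpha>/2) * (\<Sum>j. \<bar>Qf R11 R12 R22 (a3 \<Theta> j) (a4 \<Theta> j)\<bar> powr (\<alpha>/2))
       - (1/2) powr (\<alpha>/2) * (\<Sum>j. \<bar>Qf R11 R12 R22 (a1 \<Theta> (j + h) - a3 \<Theta> j)
                                         (a2 \<Theta> (j + h) - a4 \<Theta> j)\<bar> powr (\<alpha>/2)))"
  proof -
  interpret L4 M \<alpha> R11 R12 R22 Z1 Z2
    by (rule L4.intro) (fact assms)+
  show ?thesis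
    by (intro allI conjI part_a[OF assms(4) assms(5) assms(13) assms(14)] part_b[OF assms(4) assms(5) assms(13) assms(14)])
qed

end
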